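(* Under the standing assumptions, let $H$ and $L$ be wide subgroupoids of $\mathcal G$ such that $J_h\neq\{0\}$ for every $h\in H$ and $J_l\neq\{0\}$ for every $l\in L$. If $R^{\beta_H}=R^{\beta_L}$, then $H=L$.
   Context: All rings and algebras are associative and unital. A groupoid is a nonempty set $\mathcal G$ with a partially defined associative multiplication in which every $g$ has an inverse $g^{-1}$, a left identity $r(g)=gg^{-1}$ and a right identity $d(g)=g^{-1}g$; $gh$ is defined iff $d(g)=r(h)$; $\mathcal G_0$ is the set of identities. A subgroupoid is a nonempty subset closed under inverses and defined products; it is wide if it contains $\mathcal G_0$. Standing assumptions: $K$ commutative ring, $R$ a $K$-algebra, $\mathcal G$ a finite groupoid, $\beta=(\{E_g\},\{\beta_g\})$ a unital action of $\mathcal G$ on $R$: $E_g=E_{r(g)}$ is an ideal of $R$, unital with identity $1_g$ (so $1_{g^{-1}}=1_{d(g)}$), $\beta_g:E_{g^{-1}}\to E_g$ a $K$-algebra isomorphism, $\beta_e=\mathrm{id}_{E_e}$ for $e\in\mathcal G_0$, $\beta_g\beta_h(x)=\beta_{gh}(x)$ whenever $d(g)=r(h)$, $x\in E_{h^{-1}}$; $R=\bigoplus_{e\in\mathcal G_0}E_e$; and $R$ is a $\beta$-Galois extension of $R^\beta$: there exist $x_i,y_i\in R$ ($1\le i\le m$) with $\sum_i x_i\beta_g(y_i1_{g^{-1}})=1_g$ if $g\in\mathcal G_0$ and $=0$ otherwise. For a subgroupoid $H$, $R^{\beta_H}=\{r\in R:\beta_h(r1_{h^{-1}})=r1_h\ \forall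 h\in H\}$, and $R^\beta=R^{\beta_{\mathcal G}}$. For $g\in\mathcal G$, $J_g=\{r\in E_g: r\beta_g(x1_{g^{-1}})=xr\ \forall x\in R\}$. *)

theory Defs
  imports Main
begin

text \<open>A groupoid is given by a carrier G, a multiplication m (meaningful only when
  d g = r h) and an inversion i.  Range and domain are r g = g g^-1, d g = g^-1 g.\<close>

definition gr_r :: "('g \<Rightarrow> 'g \<Rightarrow> 'g) \<Rightarrow> ('g \<Rightarrow> 'g) \<Rightarrow> 'g \<Rightarrow> 'g" where
  "gr_r m i g = m g (i g)"

definition gr_d :: "('g \<Rightarrow> 'g \<Rightarrow> 'g) \<Rightarrow> ('g \<Rightarrow> 'g) \<Rightarrow> 'g \<Rightarrow> 'g" where
  "gr_d m i g = m (i g) g"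

definition groupoid :: "'g set \<Rightarrow> ('g \<Rightarrow> 'g \<Rightarrow> 'g) \<Rightarrow> ('g \<Rightarrow> 'g) \<Rightarrow> bool" where
  "groupoid G m i \<longleftrightarrow>
     G \<noteq> {} \<and>
     (\<forall>g\<in>G. i g \<in> G \<and> i (i g) = g) \<and>
     (\<forall>g\<in>G. \<forall>h\<in>G. gr_d m i g = gr_r m i h \<longrightarrow>
         m g h \<in> G \<and> gr_r m i (m g h) = gr_r m i g \<and> gr_d m i (m g h) = gr_d m i h) \<and>
     (\<forall>g\<in>G. \<forall>h\<in>G. \<forall>k\<in>G. gr_d m i g = gr_r m i h \<and> gr_d m i h = gr_r m i k \<longrightarrow>
         m (m g h) k = m g (m h k)) \<and>
     (\<forall>g\<in>G. m (gr_r m i g) g = g \<and> m g (gr_d m i g) = g) \<and>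
     (\<forall>g\<in>G. gr_r m i (gr_r m i g) = gr_r m i g \<and> gr_d m i (gr_r m i g) = gr_r m i g \<and>
            gr_r m i (gr_d m i g) = gr_d m i g \<and> gr_d m i (gr_d m i g) = gr_d m i g)"

definition gr_ids :: "'g set \<Rightarrow> ('g \<Rightarrow> 'g \<Rightarrow> 'g) \<Rightarrow> ('g \<Rightarrow> 'g) \<Rightarrow> 'g set" where
  "gr_ids G m i = gr_r m i ` G"

definition subgroupoid :: "'g set \<Rightarrow> 'g set \<Rightarrow> ('g \<Rightarrow> 'g \<Rightarrow> 'g) \<Rightarrow> ('g \<Rightarrow> 'g) \<Rightarrow> bool" where
  "subgroupoid H G m i \<longleftrightarrow> H \<noteq> {} \<and> H \<subseteq> G \<and> (\<forall>h\<in>H. i h \<in> H) \<and>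
     (\<forall>g\<in>H. \<forall>h\<in>H. gr_d m i g = gr_r m i h \<longrightarrow> m g h \<in> H)"

definition wide_subgroupoid :: "'g set \<Rightarrow> 'g set \<Rightarrow> ('g \<Rightarrow> 'g \<Rightarrow> 'g) \<Rightarrow> ('g \<Rightarrow> 'g) \<Rightarrow> bool" where
  "wide_subgroupoid H G m i \<longleftrightarrow> subgroupoid H G m i \<and> gr_ids G m i \<subseteq> H"

definition two_sided_ideal :: "'r::ring_1 set \<Rightarrow> bool" where
  "two_sided_ideal I \<longleftrightarrow> 0 \<in> I \<and> (\<forall>x\<in>I. \<forall>y\<in>I. x + y \<in> I) \<and> (\<forall>x\<in>I. - x \<in> I) \<and>
     (\<forall>x\<in>I. \<forall>a. a * x \<in> I \<and> x * a \<in> I)"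

definition is_unit_of :: "'r::ring_1 \<Rightarrow> 'r set \<Rightarrow> bool" where
  "is_unit_of u I \<longleftrightarrow> u \<in> I \<and> (\<forall>x\<in>I. u * x = x \<and> x * u = x)"

definition ring_iso_betw :: "('r::ring_1 \<Rightarrow> 'r) \<Rightarrow> 'r set \<Rightarrow> 'r set \<Rightarrow> bool" where
  "ring_iso_betw f A B \<longleftrightarrow> bij_betw f A B \<and>
     (\<forall>x\<in>A. \<forall>y\<in>A. f (x + y) = f x + f y \<and> f (x * y) = f x * f y)"

text \<open>Unital action beta = ({E_g}, {beta_g}) of G on R (R = the whole type 'r), with
  u g = 1_g the identity of E_g, together with R = direct sum of the E_e, e in G_0.\<close>
definition unital_action ::
  "'g set \<Rightarrow> ('g \<Rightarrow> 'g \<Rightarrow> 'g) \<Rightarrow> ('g \<Rightarrow> 'g) \<Rightarrow> ('g \<Rightarrow> 'r::ring_1 set) \<Rightarrow> ('g \<Rightarrow> 'r) \<Rightarrow>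
   ('g \<Rightarrow> 'r \<Rightarrow> 'r) \<Rightarrow> bool" where
  "unital_action G m i E u \<beta> \<longleftrightarrow>
     (\<forall>g\<in>G. E g = E (gr_r m i g)) \<and>
     (\<forall>g\<in>G. two_sided_ideal (E g)) \<and>
     (\<forall>g\<in>G. is_unit_of (u g) (E g)) \<and>
     (\<forall>g\<in>G. ring_iso_betw (\<beta> g) (E (i g)) (E g)) \<and>
     (\<forall>e\<in>gr_ids G m i. \<forall>x\<in>E e. \<beta> e x = x) \<and>
     (\<forall>g\<in>G. \<forall>h\<in>G. gr_d m i g = gr_r m i h \<longrightarrow>
        (\<forall>x\<in>E (i h). \<beta> g (\<beta> h x) = \<beta> (m g h) x)) \<and>
     (\<forall>x. \<exists>!f. (\<forall>e\<in>gr_ids G m i. f e \<in> E e) \<and> (\<forall>e. e \<notin> gr_ids G m i \<longrightarrow> f e = 0) \<and>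
            x = (\<Sum>e\<in>gr_ids G m i. f e))"

definition galois_ext ::
  "'g set \<Rightarrow> ('g \<Rightarrow> 'g \<Rightarrow> 'g) \<Rightarrow> ('g \<Rightarrow> 'g) \<Rightarrow> ('g \<Rightarrow> 'r::ring_1) \<Rightarrow> ('g \<Rightarrow> 'r \<Rightarrow> 'r) \<Rightarrow> bool" where
  "galois_ext G m i u \<beta> \<longleftrightarrow>
     (\<exists>(n::nat) (xs::nat \<Rightarrow> 'r) ys. \<forall>g\<in>G.
        (\<Sum>k<n. xs k * \<beta> g (ys k * u (i g))) = (if g \<in> gr_ids G m i then u g else 0))"

definition fixed_ring :: "'g set \<Rightarrow> ('g \<Rightarrow> 'g) \<Rightarrow> ('g \<Rightarrow> 'r::ring_1) \<Rightarrow> ('g \<Rightarrow> 'r \<Rightarrow> 'r) \<Rightarrow> 'r set" where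
  "fixed_ring H i u \<beta> = {x. \<forall>h\<in>H. \<beta> h (x * u (i h)) = x * u h}"

definition J_set :: "('g \<Rightarrow> 'r::ring_1 set) \<Rightarrow> ('g \<Rightarrow> 'g) \<Rightarrow> ('g \<Rightarrow> 'r) \<Rightarrow> ('g \<Rightarrow> 'r \<Rightarrow> 'r) \<Rightarrow> 'g \<Rightarrow> 'r set" where
  "J_set E i u \<beta> g = {x \<in> E g. \<forall>y. x * \<beta> g (y * u (i g)) = y * x}"

end

theory Submission
  imports Defs
begin


locale ga =
  fixes G :: "'g set" and m :: "'g \<Rightarrow> 'g \<Rightarrow> 'g" and i :: "'g \<Rightarrow> 'g"
    and E :: "'g \<Rightarrow> 'r::ring_1 set" and u :: "'g \<Rightarrow> 'r" and \<beta> :: "'g \<Rightarrow> 'r \<Rightarrow> 'r"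
  assumes grp: "groupoid G m i" and fin: "finite G" and act: "unital_action G m i E u \<beta>"
begin

abbreviation r where "r \<equiv> gr_r m i"
abbreviation d where "d \<equiv> gr_d m i"
abbreviation G0 where "G0 \<equiv> gr_ids G m i"

lemma ax_inv: "\<forall>g\<in>G. i g \<in> G \<and> i (i g) = g"
  by (insert grp, unfold groupoid_def, elim conjE, assumption)
lemma ax_mul: "\<forall>g\<in>G. \<forall>h\<in>G. gr_d m i g = gr_r m i h \<longrightarrow>
         m g h \<in> G \<and> gr_r m i (m g h) = gr_r m i g \<and> gr_d m i (m g h) = gr_d m i h"
  by (insert grp, unfold groupoid_def, elim conjE, assumption)
lemma ax_assoc: "\<forall>g\<in>G. \<forall>h\<in>G. \<forall>k\<in>G. gr_d m i g = gr_r m i h \<and> gr_d m i h = gr_r m i k \<longrightarrow>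
         m (m g h) k = m g (m h k)"
  by (insert grp, unfold groupoid_def, elim conjE, assumption)
lemma ax_unit: "\<forall>g\<in>G. m (gr_r m i g) g = g \<and> m g (gr_d m i g) = g"
  by (insert grp, unfold groupoid_def, elim conjE, assumption)
lemma ax_id: "\<forall>g\<in>G. gr_r m i (gr_r m i g) = gr_r m i g \<and> gr_d m i (gr_r m i g) = gr_r m i g \<and>
            gr_r m i (gr_d m i g) = gr_d m i g \<and> gr_d m i (gr_d m i g) = gr_d m i g"
  by (insert grp, unfold groupoid_def, elim conjE, assumption)

lemma inv: "g \<in> G \<Longrightarrow> i g \<in> G" "g \<in> G \<Longrightarrow> i (i g) = g"
  using ax_inv by blast+

lemma mul: "g \<in> G \<Longrightarrow> h \<in> G \<Longrightarrow> d g = r h \<Longrightarrow> m g h \<in> G"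
  "g \<in> G \<Longrightarrow> h \<in> G \<Longrightarrow> d g = r h \<Longrightarrow> r (m g h) = r g"
  "g \<in> G \<Longrightarrow> h \<in> G \<Longrightarrow> d g = r h \<Longrightarrow> d (m g h) = d h"
  using ax_mul by blast+

lemma assoc: "g \<in> G \<Longrightarrow> h \<in> G \<Longrightarrow> k \<in> G \<Longrightarrow> d g = r h \<Longrightarrow> d h = r k \<Longrightarrow>
  m (m g h) k = m g (m h k)"
  using ax_assoc by blast

lemma unit_lr: "g \<in> G \<Longrightarrow> m (r g) g = g" "g \<in> G \<Longrightarrow> m g (d g) = g"
  using ax_unit by blast+

lemma rd_id: "g \<in> G \<Longrightarrow> r (r g) = r g" "g \<in> G \<Longrightarrow> d (r g) = r g"
  "g \<in> G \<Longrightarrow> r (d g) = d g" "g \<in> G \<Longrightarrow> d (d g) = d g"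
  using ax_id by blast+

lemma r_inv: "g \<in> G \<Longrightarrow> r (i g) = d g"
  using inv by (simp add: gr_r_def gr_d_def)

lemma d_inv: "g \<in> G \<Longrightarrow> d (i g) = r g"
  using inv by (simp add: gr_r_def gr_d_def)

lemma r_in: "g \<in> G \<Longrightarrow> r g \<in> G"
  using mul(1)[of g "i g"] inv r_inv by (simp add: gr_r_def)

lemma d_in: "g \<in> G \<Longrightarrow> d g \<in> G"
  using mul(1)[of "i g" g] inv d_inv by (simp add: gr_d_def)

lemma G0_D: "e \<in> G0 \<Longrightarrow> e \<in> G \<and> r e = e \<and> d e = e"
  unfolding gr_ids_def using r_in rd_id by auto

lemma G0_fin: "finite G0" unfolding gr_ids_def using fin by simp

lemma cancel: "g \<in> G \<Longrightarrow> l \<in> G \<Longrightarrow> d g = r l \<Longrightarrow> m (i g) (m g l) = l"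
proof -
  assume a: "g \<in> G" "l \<in> G" "d g = r l"
  have "m (i g) (m g l) = m (m (i g) g) l"
    using assoc[of "i g" g l] a inv d_inv by simp
  also have "m (i g) g = d g" by (simp add: gr_d_def)
  finally show ?thesis using a unit_lr by simp
qed

lemma ident_prod: "g \<in> G \<Longrightarrow> l \<in> G \<Longrightarrow> d g = r l \<Longrightarrow> m g l \<in> G0 \<Longrightarrow> l = i g"
proof -
  assume a: "g \<in> G" "l \<in> G" "d g = r l" "m g l \<in> G0"
  have "r (m g l) = m g l" using G0_D a(4) by blast
  hence e: "m g l = r g" using mul(2) a by simp
  have "l = m (i g) (m g l)" using cancel a by simp
  also have "\<dots> = m (i g) (r g)" using e by simp
  also have "\<dots> = m (i g) (d (i g))" using d_inv a by simp
  also have "\<dots> = i g" using unit_lr inv a by simp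
  finally show ?thesis .
qed

lemma ax_act: "(\<forall>g\<in>G. E g = E (gr_r m i g)) \<and>
     (\<forall>g\<in>G. two_sided_ideal (E g)) \<and>
     (\<forall>g\<in>G. is_unit_of (u g) (E g)) \<and>
     (\<forall>g\<in>G. ring_iso_betw (\<beta> g) (E (i g)) (E g)) \<and>
     (\<forall>e\<in>gr_ids G m i. \<forall>x\<in>E e. \<beta> e x = x) \<and>
     (\<forall>g\<in>G. \<forall>h\<in>G. gr_d m i g = gr_r m i h \<longrightarrow>
        (\<forall>x\<in>E (i h). \<beta> g (\<beta> h x) = \<beta> (m g h) x)) \<and>
     (\<forall>x. \<exists>!f. (\<forall>e\<in>gr_ids G m i. f e \<in> E e) \<and> (\<forall>e. e \<notin> gr_ids G m i \<longrightarrow> f e = 0) \<and>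
            x = (\<Sum>e\<in>gr_ids G m i. f e))"
  using act unfolding unital_action_def .

lemma E_r: "g \<in> G \<Longrightarrow> E g = E (r g)"
  using ax_act[THEN conjunct1] by blast
lemma ideal: "g \<in> G \<Longrightarrow> two_sided_ideal (E g)"
  using ax_act[THEN conjunct2, THEN conjunct1] by blast
lemma unitE: "g \<in> G \<Longrightarrow> is_unit_of (u g) (E g)"
  using ax_act[THEN conjunct2, THEN conjunct2, THEN conjunct1] by blast
lemma iso: "g \<in> G \<Longrightarrow> ring_iso_betw (\<beta> g) (E (i g)) (E g)"
  using ax_act[THEN conjunct2, THEN conjunct2, THEN conjunct2, THEN conjunct1] by blast
lemma comp: "g \<in> G \<Longrightarrow> h \<in> G \<Longrightarrow> d g = r h \<Longrightarrow> x \<in> E (i h) \<Longrightarrow> \<beta> g (\<beta> h x) = \<beta> (m g h) x"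
  using ax_act[THEN conjunct2, THEN conjunct2, THEN conjunct2, THEN conjunct2, THEN conjunct2, THEN conjunct1] by blast
lemma dsum: "\<exists>!f. (\<forall>e\<in>G0. f e \<in> E e) \<and> (\<forall>e. e \<notin> G0 \<longrightarrow> f e = 0) \<and> x = (\<Sum>e\<in>G0. f e)"
  using ax_act[THEN conjunct2, THEN conjunct2, THEN conjunct2, THEN conjunct2, THEN conjunct2, THEN conjunct2] by blast

lemma ideal_zero: "g \<in> G \<Longrightarrow> 0 \<in> E g"
  using ideal[of g] unfolding two_sided_ideal_def by blast
lemma ideal_add: "g \<in> G \<Longrightarrow> x \<in> E g \<Longrightarrow> y \<in> E g \<Longrightarrow> x + y \<in> E g"
proof -
  assume "g \<in> G" "x \<in> E g" "y \<in> E g"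
  moreover have "\<forall>x\<in>E g. \<forall>y\<in>E g. x + y \<in> E g" using ideal[OF \<open>g \<in> G\<close>] unfolding two_sided_ideal_def by blast
  ultimately show ?thesis by simp
qed
lemma ideal_mult_ax: "g \<in> G \<Longrightarrow> \<forall>x\<in>E g. \<forall>a. a * x \<in> E g \<and> x * a \<in> E g"
  using ideal[of g] unfolding two_sided_ideal_def by blast
lemma ideal_mult: "g \<in> G \<Longrightarrow> x \<in> E g \<Longrightarrow> a * x \<in> E g" "g \<in> G \<Longrightarrow> x \<in> E g \<Longrightarrow> x * a \<in> E g"
  using ideal_mult_ax by simp_all
lemma u_in: "g \<in> G \<Longrightarrow> u g \<in> E g" using unitE[of g] unfolding is_unit_of_def by blast
lemma u_ax: "g \<in> G \<Longrightarrow> \<forall>x\<in>E g. u g * x = x \<and> x * u g = x" using unitE[of g] unfolding is_unit_of_def by blast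
lemma u_l: "g \<in> G \<Longrightarrow> x \<in> E g \<Longrightarrow> u g * x = x" using u_ax by simp
lemma u_r: "g \<in> G \<Longrightarrow> x \<in> E g \<Longrightarrow> x * u g = x" using u_ax by simp

lemma E_inv: "g \<in> G \<Longrightarrow> E (i g) = E (d g)"
  using E_r[of "i g"] inv r_inv by simp

lemma u_rg: "g \<in> G \<Longrightarrow> u (r g) = u g"
proof -
  assume g: "g \<in> G"
  have "u (r g) = u (r g) * u g" using u_r[of g "u (r g)"] u_in[of "r g"] r_in E_r g by simp
  also have "\<dots> = u g" using u_l[of "r g" "u g"] u_in[of g] r_in E_r g by simp
  finally show ?thesis .
qed

lemma u_inv: "g \<in> G \<Longrightarrow> u (i g) = u (d g)"
  using u_rg[of "i g"] inv r_inv by simp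

lemma disj: "e \<in> G0 \<Longrightarrow> f \<in> G0 \<Longrightarrow> e \<noteq> f \<Longrightarrow> x \<in> E e \<Longrightarrow> x \<in> E f \<Longrightarrow> x = 0"
proof -
  assume a: "e \<in> G0" "f \<in> G0" "e \<noteq> f" "x \<in> E e" "x \<in> E f"
  define f1 where "f1 = (\<lambda>k. if k = e then x else 0)"
  define f2 where "f2 = (\<lambda>k. if k = f then x else 0)"
  have P1: "(\<forall>k\<in>G0. f1 k \<in> E k) \<and> (\<forall>k. k \<notin> G0 \<longrightarrow> f1 k = 0) \<and> x = (\<Sum>k\<in>G0. f1 k)"
    using a G0_D ideal_zero G0_fin unfolding f1_def by (auto simp: sum.delta)
  have P2: "(\<forall>k\<in>G0. f2 k \<in> E k) \<and> (\<forall>k. k \<notin> G0 \<longrightarrow> f2 k = 0) \<and> x = (\<Sum>k\<in>G0. f2 k)"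
    using a G0_D ideal_zero G0_fin unfolding f2_def by (auto simp: sum.delta)
  have "f1 = f2" using dsum[of x] P1 P2 by blast
  hence "f1 e = f2 e" by simp
  thus ?thesis using a unfolding f1_def f2_def by simp
qed

lemma orth: "e \<in> G0 \<Longrightarrow> f \<in> G0 \<Longrightarrow> e \<noteq> f \<Longrightarrow> x \<in> E e \<Longrightarrow> y \<in> E f \<Longrightarrow> x * y = 0"
  using disj[of e f "x*y"] ideal_mult G0_D by blast

lemma beta_add: "g \<in> G \<Longrightarrow> x \<in> E (i g) \<Longrightarrow> y \<in> E (i g) \<Longrightarrow> \<beta> g (x + y) = \<beta> g x + \<beta> g y"
  using iso unfolding ring_iso_betw_def by blast

lemma beta_in: "g \<in> G \<Longrightarrow> x \<in> E (i g) \<Longrightarrow> \<beta> g x \<in> E g"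
  using iso unfolding ring_iso_betw_def bij_betw_def by blast

lemma beta_0: "g \<in> G \<Longrightarrow> \<beta> g 0 = 0"
proof -
  assume g: "g \<in> G"
  have "\<beta> g 0 = \<beta> g (0 + 0)" by simp
  also have "\<dots> = \<beta> g 0 + \<beta> g 0" using beta_add ideal_zero inv g by blast
  finally show ?thesis by simp
qed

lemma sum_in: "finite A \<Longrightarrow> g \<in> G \<Longrightarrow> (\<forall>a\<in>A. f a \<in> E g) \<Longrightarrow> sum f A \<in> E g"
  by (induction A rule: finite_induct) (auto simp: ideal_zero ideal_add)

lemma beta_sum: "finite A \<Longrightarrow> g \<in> G \<Longrightarrow> (\<forall>a\<in>A. f a \<in> E (i g)) \<Longrightarrow>
   \<beta> g (sum f A) = (\<Sum>a\<in>A. \<beta> g (f a))"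
proof (induction A rule: finite_induct)
  case empty then show ?case using beta_0 by simp
next
  case (insert x F)
  have "sum f F \<in> E (i g)" using sum_in[of F "i g" f] insert inv by blast
  hence "\<beta> g (f x + sum f F) = \<beta> g (f x) + \<beta> g (sum f F)"
    using beta_add insert by blast
  then show ?case using insert by simp
qed

end


context ga
begin

lemma r_G0: "g \<in> G \<Longrightarrow> r g \<in> G0" unfolding gr_ids_def by blast
lemma d_G0: "g \<in> G \<Longrightarrow> d g \<in> G0" using r_G0[of "i g"] inv r_inv by simp

lemma K: assumes g: "g \<in> G" and l: "l \<in> G" and z: "z \<in> E (i l)"
  shows "\<beta> g (\<beta> l z * u (i g)) = (if r l = d g then \<beta> (m g l) z else 0)"
proof (cases "r l = d g")
  case True
  have "\<beta> l z \<in> E (i g)" using beta_in[OF l z] E_r[OF l] True E_inv[OF g] by simp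
  hence "\<beta> l z * u (i g) = \<beta> l z" using u_r inv g by blast
  then show ?thesis using True comp[OF g l _ z] by simp
next
  case False
  have a: "\<beta> l z \<in> E (r l)" using beta_in[OF l z] E_r[OF l] by simp
  have b: "u (i g) \<in> E (d g)" using u_in[of "i g"] inv g E_inv g by simp
  have "\<beta> l z * u (i g) = 0" using orth[OF r_G0[OF l] d_G0[OF g] False a b] .
  then show ?thesis using False beta_0 g by simp
qed

definition tr :: "'g set \<Rightarrow> 'r \<Rightarrow> 'r" where
  "tr L y = (\<Sum>l\<in>L. \<beta> l (y * u (i l)))"

lemma zin: "l \<in> G \<Longrightarrow> y * u (i l) \<in> E (i l)"
  using u_in[of "i l"] inv ideal_mult by blast

lemma T: assumes g: "g \<in> G" and L: "L \<subseteq> G"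
  shows "\<beta> g (tr L y * u (i g)) = (\<Sum>l\<in>L. if r l = d g then \<beta> (m g l) (y * u (i l)) else 0)"
proof -
  have fL: "finite L" using L fin finite_subset by blast
  have "tr L y * u (i g) = (\<Sum>l\<in>L. \<beta> l (y * u (i l)) * u (i g))"
    unfolding tr_def by (simp add: sum_distrib_right)
  moreover have "\<forall>l\<in>L. \<beta> l (y * u (i l)) * u (i g) \<in> E (i g)"
    using u_in[of "i g"] inv g ideal_mult by blast
  ultimately have "\<beta> g (tr L y * u (i g)) = (\<Sum>l\<in>L. \<beta> g (\<beta> l (y * u (i l)) * u (i g)))"
    using beta_sum[OF fL g] by simp
  also have "\<dots> = (\<Sum>l\<in>L. if r l = d g then \<beta> (m g l) (y * u (i l)) else 0)"
    using K[OF g] L zin by (intro sum.cong) auto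
  finally show ?thesis .
qed

lemma tr_fixed: assumes L: "subgroupoid L G m i" and h: "h \<in> L"
  shows "\<beta> h (tr L y * u (i h)) = tr L y * u h"
proof -
  have LG: "L \<subseteq> G" using L unfolding subgroupoid_def by blast
  have hG: "h \<in> G" using LG h by blast
  have fL: "finite L" using LG fin finite_subset by blast
  have Li: "\<And>l. l \<in> L \<Longrightarrow> i l \<in> L" using L unfolding subgroupoid_def by blast
  have Lm: "\<And>g l. g \<in> L \<Longrightarrow> l \<in> L \<Longrightarrow> d g = r l \<Longrightarrow> m g l \<in> L" using L unfolding subgroupoid_def by blast
  have "\<beta> h (tr L y * u (i h)) = (\<Sum>l\<in>L. if r l = d h then \<beta> (m h l) (y * u (i l)) else 0)"
    using T[OF hG LG] .
  also have "\<dots> = (\<Sum>l\<in>{l\<in>L. r l = d h}. \<beta> (m h l) (y * u (i l)))"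
    by (rule sum.inter_filter[OF fL, symmetric])
  also have "\<dots> = (\<Sum>l\<in>{l\<in>L. r l = d h}. \<beta> (m h l) (y * u (i (m h l))))"
  proof (intro sum.cong refl)
    fix l assume "l \<in> {l\<in>L. r l = d h}"
    hence l: "l \<in> G" "d h = r l" using LG by auto
    have "u (i (m h l)) = u (d (m h l))" using u_inv[OF mul(1)[OF hG l(1) l(2)]] .
    also have "\<dots> = u (d l)" using mul(3) hG l by simp
    also have "\<dots> = u (i l)" using u_inv l by simp
    finally show "\<beta> (m h l) (y * u (i l)) = \<beta> (m h l) (y * u (i (m h l)))" by simp
  qed
  also have "\<dots> = (\<Sum>l\<in>{l\<in>L. r l = r h}. \<beta> l (y * u (i l)))"
  proof (rule sum.reindex_bij_betw[where h="m h"])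
    show "bij_betw (m h) {l \<in> L. r l = d h} {l \<in> L. r l = r h}"
      unfolding bij_betw_def
    proof
      show "inj_on (m h) {l \<in> L. r l = d h}"
      proof (rule inj_onI)
        fix a b assume a: "a \<in> {l \<in> L. r l = d h}" and b: "b \<in> {l \<in> L. r l = d h}"
          and e: "m h a = m h b"
        have "a = m (i h) (m h a)" using cancel[of h a] a LG hG by auto
        also have "\<dots> = m (i h) (m h b)" using e by simp
        also have "\<dots> = b" using cancel[of h b] b LG hG by auto
        finally show "a = b" .
      qed
      show "m h ` {l \<in> L. r l = d h} = {l \<in> L. r l = r h}"
      proof
        show "m h ` {l \<in> L. r l = d h} \<subseteq> {l \<in> L. r l = r h}"
        proof
          fix x assume "x \<in> m h ` {l \<in> L. r l = d h}"
          then obtain l where l: "l \<in> L" "r l = d h" "x = m h l" by blast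
          have "l \<in> G" using l LG by blast
          then show "x \<in> {l \<in> L. r l = r h}" using Lm[OF h l(1)] l mul(2)[OF hG] by simp
        qed
        show "{l \<in> L. r l = r h} \<subseteq> m h ` {l \<in> L. r l = d h}"
        proof
          fix l' assume l': "l' \<in> {l \<in> L. r l = r h}"
          hence l'G: "l' \<in> G" "r l' = r h" "l' \<in> L" using LG by auto
          define l where "l = m (i h) l'"
          have dd: "d (i h) = r l'" using d_inv hG l'G by simp
          have lL: "l \<in> L" unfolding l_def using Lm[OF Li[OF h] l'G(3) dd] .
          have rl: "r l = d h" unfolding l_def using mul(2)[OF inv(1)[OF hG] l'G(1) dd] r_inv hG by simp
          have "m h l = m (m h (i h)) l'" unfolding l_def
            using assoc[OF hG inv(1)[OF hG] l'G(1)] dd r_inv hG by simp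
          also have "m h (i h) = r h" by (simp add: gr_r_def)
          finally have "m h l = l'" using unit_lr(1)[OF l'G(1)] l'G by simp
          thus "l' \<in> m h ` {l \<in> L. r l = d h}" using lL rl by force
        qed
      qed
    qed
  qed
  also have "\<dots> = (\<Sum>l\<in>L. if r l = r h then \<beta> l (y * u (i l)) else 0)"
    by (rule sum.inter_filter[OF fL])
  also have "\<dots> = (\<Sum>l\<in>L. \<beta> l (y * u (i l)) * u h)"
  proof (intro sum.cong refl)
    fix l assume lL: "l \<in> L"
    hence l: "l \<in> G" using LG by blast
    have a: "\<beta> l (y * u (i l)) \<in> E (r l)" using beta_in[OF l zin[OF l]] E_r[OF l] by simp
    have b: "u h = u (r h)" using u_rg hG by simp
    show "(if r l = r h then \<beta> l (y * u (i l)) else 0) = \<beta> l (y * u (i l)) * u h"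
    proof (cases "r l = r h")
      case True
      then show ?thesis using a b u_r[of "r h"] r_in hG by simp
    next
      case False
      have "u (r h) \<in> E (r h)" using u_in r_in hG by blast
      then show ?thesis using orth[OF r_G0[OF l] r_G0[OF hG] False a] False b by simp
    qed
  qed
  also have "\<dots> = tr L y * u h" unfolding tr_def by (simp add: sum_distrib_right)
  finally show ?thesis .
qed

lemma tr_in_fixed: "subgroupoid L G m i \<Longrightarrow> tr L y \<in> fixed_ring L i u \<beta>"
  unfolding fixed_ring_def using tr_fixed[of L] by simp

end


context ga
begin

lemma incl:
  assumes gal: "galois_ext G m i u \<beta>"
    and H: "subgroupoid H G m i" and L: "wide_subgroupoid L G m i"
    and J: "\<forall>h\<in>H. J_set E i u \<beta> h \<noteq> {0}"
    and fx: "fixed_ring L i u \<beta> \<subseteq> fixed_ring H i u \<beta>"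
  shows "H \<subseteq> L"
proof
  fix g assume gH: "g \<in> H"
  show "g \<in> L"
  proof (rule ccontr)
    assume gL: "g \<notin> L"
    have LS: "subgroupoid L G m i" using L unfolding wide_subgroupoid_def by blast
    have LG: "L \<subseteq> G" using LS unfolding subgroupoid_def by blast
    have L0: "G0 \<subseteq> L" using L unfolding wide_subgroupoid_def by blast
    have Li: "\<And>l. l \<in> L \<Longrightarrow> i l \<in> L" using LS unfolding subgroupoid_def by blast
    have fL: "finite L" using LG fin finite_subset by blast
    have g: "g \<in> G" using H gH unfolding subgroupoid_def by blast
    obtain n :: nat and xs ys where gx: "\<forall>g\<in>G.
        (\<Sum>k<n. xs k * \<beta> g (ys k * u (i g))) = (if g \<in> G0 then u g else 0)"
      using gal unfolding galois_ext_def by blast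
    define S where "S = (\<Sum>k<n. xs k * \<beta> g (tr L (ys k) * u (i g)))"
    have "S = (\<Sum>k<n. xs k * (\<Sum>l\<in>L. if r l = d g then \<beta> (m g l) (ys k * u (i (m g l))) else 0))"
      unfolding S_def
    proof (intro sum.cong refl)
      fix k
      have "\<beta> g (tr L (ys k) * u (i g)) = (\<Sum>l\<in>L. if r l = d g then \<beta> (m g l) (ys k * u (i l)) else 0)"
        using T[OF g LG] .
      also have "\<dots> = (\<Sum>l\<in>L. if r l = d g then \<beta> (m g l) (ys k * u (i (m g l))) else 0)"
      proof (intro sum.cong refl)
        fix l assume "l \<in> L"
        hence lG: "l \<in> G" using LG by blast
        show "(if r l = d g then \<beta> (m g l) (ys k * u (i l)) else 0) =
              (if r l = d g then \<beta> (m g l) (ys k * u (i (m g l))) else 0)"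
        proof (cases "r l = d g")
          case True
          have "u (i (m g l)) = u (d (m g l))" using u_inv[OF mul(1)[OF g lG True[symmetric]]] .
          also have "\<dots> = u (d l)" using mul(3)[OF g lG True[symmetric]] by simp
          also have "\<dots> = u (i l)" using u_inv lG by simp
          finally show ?thesis by simp
        qed simp
      qed
      finally show "xs k * \<beta> g (tr L (ys k) * u (i g)) =
         xs k * (\<Sum>l\<in>L. if r l = d g then \<beta> (m g l) (ys k * u (i (m g l))) else 0)" by simp
    qed
    also have "\<dots> = (\<Sum>k<n. \<Sum>l\<in>L. if r l = d g then xs k * \<beta> (m g l) (ys k * u (i (m g l))) else 0)"
      unfolding sum_distrib_left by (intro sum.cong refl) auto
    also have "\<dots> = (\<Sum>l\<in>L. \<Sum>k<n. if r l = d g then xs k * \<beta> (m g l) (ys k * u (i (m g l))) else 0)"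
      by (rule sum.swap)
    also have "\<dots> = (\<Sum>l\<in>L. (0::'r))"
    proof (intro sum.cong refl)
      fix l assume lL: "l \<in> L"
      hence lG: "l \<in> G" using LG by blast
      show "(\<Sum>k<n. if r l = d g then xs k * \<beta> (m g l) (ys k * u (i (m g l))) else 0) = 0"
      proof (cases "r l = d g")
        case True
        have mG: "m g l \<in> G" using mul(1)[OF g lG True[symmetric]] .
        have nid: "m g l \<notin> G0"
        proof
          assume "m g l \<in> G0"
          hence "l = i g" using ident_prod[OF g lG True[symmetric]] by simp
          hence "i g \<in> L" using lL by simp
          hence "i (i g) \<in> L" using Li by blast
          thus False using gL inv(2)[OF g] by simp
        qed
        have "(\<Sum>k<n. xs k * \<beta> (m g l) (ys k * u (i (m g l)))) = 0"
          using gx mG nid by simp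
        then show ?thesis using True by simp
      qed simp
    qed
    finally have S0: "S = 0" by simp
    have fixk: "\<And>k. \<beta> g (tr L (ys k) * u (i g)) = tr L (ys k) * u g"
    proof -
      fix k
      have "tr L (ys k) \<in> fixed_ring H i u \<beta>" using tr_in_fixed[OF LS] fx by blast
      thus "\<beta> g (tr L (ys k) * u (i g)) = tr L (ys k) * u g" using gH unfolding fixed_ring_def by blast
    qed
    have "S = (\<Sum>k<n. xs k * (tr L (ys k) * u g))" unfolding S_def using fixk by simp
    also have "\<dots> = (\<Sum>k<n. \<Sum>l\<in>L. xs k * \<beta> l (ys k * u (i l)) * u g)"
      unfolding tr_def by (simp add: sum_distrib_left sum_distrib_right mult.assoc)
    also have "\<dots> = (\<Sum>l\<in>L. \<Sum>k<n. xs k * \<beta> l (ys k * u (i l)) * u g)"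
      by (rule sum.swap)
    also have "\<dots> = (\<Sum>l\<in>L. (\<Sum>k<n. xs k * \<beta> l (ys k * u (i l))) * u g)"
      by (simp add: sum_distrib_right)
    also have "\<dots> = (\<Sum>l\<in>L. if l = r g then u g else 0)"
    proof (intro sum.cong refl)
      fix l assume lL: "l \<in> L"
      hence lG: "l \<in> G" using LG by blast
      have e: "(\<Sum>k<n. xs k * \<beta> l (ys k * u (i l))) = (if l \<in> G0 then u l else 0)"
        using gx lG by simp
      show "(\<Sum>k<n. xs k * \<beta> l (ys k * u (i l))) * u g = (if l = r g then u g else 0)"
      proof (cases "l = r g")
        case True
        have "l \<in> G0" using True r_G0 g by simp
        moreover have "u l * u g = u g" using True u_rg[OF g] u_l[OF g u_in[OF g]] by simp
        ultimately show ?thesis using e True by simp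
      next
        case False
        show ?thesis
        proof (cases "l \<in> G0")
          case True
          have a: "u l \<in> E l" using u_in lG .
          have b: "u g \<in> E (r g)" using u_in[OF g] E_r[OF g] by simp
          have "u l * u g = 0" using orth[OF True r_G0[OF g] False a b] .
          then show ?thesis using e True False by simp
        qed (use e False in simp)
      qed
    qed
    also have "\<dots> = u g" using fL L0 r_G0[OF g] by (simp add: sum.delta' subsetD)
    finally have ug: "u g = 0" using S0 by simp
    have "J_set E i u \<beta> g = {0}"
    proof
      show "J_set E i u \<beta> g \<subseteq> {0}"
      proof
        fix x assume "x \<in> J_set E i u \<beta> g"
        hence "x \<in> E g" unfolding J_set_def by blast
        hence "x = u g * x" using u_l[OF g] by simp
        thus "x \<in> {0}" using ug by simp
      qed
      show "{0} \<subseteq> J_set E i u \<beta> g" unfolding J_set_def using ideal_zero[OF g] by simp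
    qed
    thus False using J gH by blast
  qed
qed

end

theorem lemma3p2:
  fixes G H L :: "'g set" and m :: "'g \<Rightarrow> 'g \<Rightarrow> 'g" and i :: "'g \<Rightarrow> 'g"
    and E :: "'g \<Rightarrow> 'r::ring_1 set" and u :: "'g \<Rightarrow> 'r" and \<beta> :: "'g \<Rightarrow> 'r \<Rightarrow> 'r"
  assumes "groupoid G m i" and "finite G"
    and "unital_action G m i E u \<beta>"
    and "galois_ext G m i u \<beta>"
    and "wide_subgroupoid H G m i" and "wide_subgroupoid L G m i"
    and "\<forall>h\<in>H. J_set E i u \<beta> h \<noteq> {0}"
    and "\<forall>l\<in>L. J_set E i u \<beta> l \<noteq> {0}"
    and "fixed_ring H i u \<beta> = fixed_ring L i u \<beta>"
  shows "H = L"
proof -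
  interpret ga G m i E u \<beta> using assms(1-3) by unfold_locales
  have HS: "subgroupoid H G m i" using assms(5) unfolding wide_subgroupoid_def by blast
  have LS: "subgroupoid L G m i" using assms(6) unfolding wide_subgroupoid_def by blast
  have "H \<subseteq> L" using incl[OF assms(4) HS assms(6) assms(7)] assms(9) by simp
  moreover have "L \<subseteq> H" using incl[OF assms(4) LS assms(5) assms(8)] assms(9) by simp
  ultimately show ?thesis by blast
qed

end
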